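(* In the oceanic model under the proportional reward sharing scheme, the Price of Stability equals $1$, for every stake distribution of the atomic players and every total mass $L\ge 0$ of non-atomic players (in particular also in the purely atomic model $L=0$).
   Context: Oceanic model: a finite set $N_a$ of atomic players, player $i$ having stake $a_i>0$, and a continuum of non-atomic players of total mass $L\ge 0$ (a measurable set of them contributes stake equal to its measure). Threshold $h>0$, and $a_i<h$ for every atomic player. Each player opens her own pool or joins one; pools partition all players. A pool $S$ has stake $m(S)$ (non-atomic mass plus atomic stakes in $S$) and reward $\rho(S)=1$ if $m(S)\ge h$ (winning), else $0$. Proportional scheme: an atomic player $i$ in pool $C$ receives $\frac{a_i}{m(C)}\rho(C)$, and non-atomic players in $C$ receive $\rho(C)/m(C)$ per unit of stake. A partition into winning pools is a Nash equilibrium if no atomic player can strictly increase her payment by moving to another pool of the partition or opening a new pool alone, and no non-atomic player can strictly increase her per-unit reward by moving to another pool (a non-atomic player is infinitesimal, so her move does not change the per-unit reward of the pool she joins). $OPT(G)$ is the maximum number of pools of stake at least $h$ in a partition of all players (games are considered with total stake at least $h$); $W(\Pi)$ is the number of winning pools of $\Pi$; the Price of Stability is $\min_\Pi OPT(G)/W(\Pi)$ over Nash equilibrium partitions. *)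

theory Defs
  imports Complex_Main
begin

text \<open>Atomic players form a finite set N with stakes a; the
non-atomic players have total mass L. A partition is represented by a finite
set P of pool labels, an assignment sigma of atomic players to pools, and the
non-atomic mass ell p placed in each pool p (nonnegative, summing to L).\<close>

definition valid_partition ::
  "'a set \<Rightarrow> real \<Rightarrow> nat set \<Rightarrow> ('a \<Rightarrow> nat) \<Rightarrow> (nat \<Rightarrow> real) \<Rightarrow> bool" where
  "valid_partition N L P \<sigma> ell \<longleftrightarrow>
     finite P \<and> (\<forall>i\<in>N. \<sigma> i \<in> P) \<and> (\<forall>p\<in>P. 0 \<le> ell p) \<and> sum ell P = L"

definition pool_stake ::
  "'a set \<Rightarrow> ('a \<Rightarrow> real) \<Rightarrow> ('a \<Rightarrow> nat) \<Rightarrow> (nat \<Rightarrow> real) \<Rightarrow> nat \<Rightarrow> real" where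
  "pool_stake N a \<sigma> ell p = ell p + (\<Sum>i\<in>{i\<in>N. \<sigma> i = p}. a i)"

definition rho :: "real \<Rightarrow> real \<Rightarrow> real" where
  "rho h x = (if h \<le> x then 1 else 0)"

definition num_winning ::
  "'a set \<Rightarrow> ('a \<Rightarrow> real) \<Rightarrow> real \<Rightarrow> nat set \<Rightarrow> ('a \<Rightarrow> nat) \<Rightarrow> (nat \<Rightarrow> real) \<Rightarrow> nat" where
  "num_winning N a h P \<sigma> ell = card {p\<in>P. h \<le> pool_stake N a \<sigma> ell p}"

definition OPT :: "'a set \<Rightarrow> ('a \<Rightarrow> real) \<Rightarrow> real \<Rightarrow> real \<Rightarrow> nat" where
  "OPT N a L h = Max {num_winning N a h P \<sigma> ell | P \<sigma> ell. valid_partition N L P \<sigma> ell}"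

definition is_NE ::
  "'a set \<Rightarrow> ('a \<Rightarrow> real) \<Rightarrow> real \<Rightarrow> real \<Rightarrow> nat set \<Rightarrow> ('a \<Rightarrow> nat) \<Rightarrow> (nat \<Rightarrow> real) \<Rightarrow> bool" where
  "is_NE N a L h P \<sigma> ell \<longleftrightarrow>
     (let m = pool_stake N a \<sigma> ell in
       valid_partition N L P \<sigma> ell \<and>
       (\<forall>p\<in>P. h \<le> m p) \<and>
       (\<forall>i\<in>N. \<forall>q\<in>P. q \<noteq> \<sigma> i \<longrightarrow>
          a i * rho h (m q + a i) / (m q + a i) \<le> a i * rho h (m (\<sigma> i)) / m (\<sigma> i)) \<and>
       (\<forall>i\<in>N. a i * rho h (a i) / a i \<le> a i * rho h (m (\<sigma> i)) / m (\<sigma> i)) \<and>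
       (\<forall>p\<in>P. 0 < ell p \<longrightarrow>
          (\<forall>q\<in>P. rho h (m q) / m q \<le> rho h (m p) / m p)))"

end

theory Submission
  imports Defs "HOL-Library.FuncSet"
begin

lemma stake_total:
  assumes v: "valid_partition N L P \<sigma> ell" and fN: "finite N"
  shows "sum (pool_stake N a \<sigma> ell) P = L + sum a N"
proof -
  have fP: "finite P" and sP: "\<sigma> ` N \<subseteq> P" and sl: "sum ell P = L"
    using v unfolding valid_partition_def by auto
  have "sum (pool_stake N a \<sigma> ell) P = sum ell P + (\<Sum>p\<in>P. \<Sum>i\<in>{i\<in>N. \<sigma> i = p}. a i)"
    unfolding pool_stake_def by (simp add: sum.distrib)
  also have "(\<Sum>p\<in>P. \<Sum>i\<in>{i\<in>N. \<sigma> i = p}. a i) = sum a N"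
    using sum.group[OF fN fP sP, of a] by simp
  finally show ?thesis using sl by simp
qed

lemma win_bound:
  assumes v: "valid_partition N L P \<sigma> ell" and fN: "finite N"
    and apos: "\<forall>i\<in>N. 0 < a i"
  shows "real (num_winning N a h P \<sigma> ell) * h \<le> L + sum a N"
proof -
  have fP: "finite P" and el: "\<forall>p\<in>P. 0 \<le> ell p"
    using v unfolding valid_partition_def by auto
  let ?W = "{p\<in>P. h \<le> pool_stake N a \<sigma> ell p}"
  have nn: "\<forall>p\<in>P. 0 \<le> pool_stake N a \<sigma> ell p"
    unfolding pool_stake_def using el apos
    by (metis (no_types, lifting) add_nonneg_nonneg less_imp_le mem_Collect_eq sum_nonneg)
  have "real (card ?W) * h \<le> sum (pool_stake N a \<sigma> ell) ?W"
    by (rule sum_bounded_below) auto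
  also have "\<dots> \<le> sum (pool_stake N a \<sigma> ell) P"
    by (rule sum_mono2) (use fP nn in auto)
  also have "\<dots> = L + sum a N" by (rule stake_total[OF v fN])
  finally show ?thesis unfolding num_winning_def .
qed

lemma OPT_facts:
  assumes fN: "finite N" and apos: "\<forall>i\<in>N. 0 < a i" and h: "0 < h"
  shows "finite {num_winning N a h P \<sigma> ell | P \<sigma> ell. valid_partition N L P \<sigma> ell}"
proof -
  let ?T = "L + sum a N"
  have "{num_winning N a h P \<sigma> ell | P \<sigma> ell. valid_partition N L P \<sigma> ell} \<subseteq> {..nat \<lceil>?T / h\<rceil>}"
  proof
    fix k assume "k \<in> {num_winning N a h P \<sigma> ell | P \<sigma> ell. valid_partition N L P \<sigma> ell}"
    then obtain P \<sigma> ell where v: "valid_partition N L P \<sigma> ell" and k: "k = num_winning N a h P \<sigma> ell"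
      by blast
    have "real k * h \<le> ?T" using win_bound[OF v fN apos] k by simp
    then have "real k \<le> ?T / h" using h by (simp add: field_simps)
    then have "real k \<le> real (nat \<lceil>?T / h\<rceil>)" by linarith
    then show "k \<in> {..nat \<lceil>?T / h\<rceil>}" by simp
  qed
  then show ?thesis by (rule finite_subset) simp
qed

lemma water_fill:
  fixes K :: "nat set" and A ell0 :: "nat \<Rightarrow> real"
  assumes fK: "finite K" and neK: "K \<noteq> {}" and A0: "\<forall>p\<in>K. 0 \<le> A p"
    and e0: "\<forall>p\<in>K. 0 \<le> ell0 p" and s0: "sum ell0 K = L"
    and h0: "\<forall>p\<in>K. h \<le> A p + ell0 p"
  shows "\<exists>ell. (\<forall>p\<in>K. 0 \<le> ell p) \<and> sum ell K = L \<and> (\<forall>p\<in>K. h \<le> A p + ell p) \<and>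
     (\<forall>p\<in>K. 0 < ell p \<longrightarrow> (\<forall>q\<in>K. A p + ell p \<le> A q + ell q))"
proof -
  define g where "g = (\<lambda>t. \<Sum>p\<in>K. max 0 (t - A p))"
  have L0: "0 \<le> L" using s0 e0 sum_nonneg by metis
  obtain p0 where p0: "p0 \<in> K" using neK by blast
  have "g 0 = 0" unfolding g_def by (rule sum.neutral) (use A0 in auto)
  then have g0: "g 0 \<le> L" using L0 by simp
  have g1: "L \<le> g (L + A p0)"
  proof -
    have "max 0 (L + A p0 - A p0) \<le> g (L + A p0)"
      unfolding g_def by (rule member_le_sum) (use p0 fK in auto)
    then show ?thesis by simp
  qed
  have cont: "\<forall>x. 0 \<le> x \<and> x \<le> L + A p0 \<longrightarrow> isCont g x"
    unfolding g_def by (auto intro!: continuous_intros)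
  obtain t where t0: "0 \<le> t" and gt: "g t = L"
    using IVT[of g 0 L "L + A p0", OF g0 g1 _ cont] L0 A0 p0 by auto
  define ell where "ell = (\<lambda>p. max 0 (t - A p))"
  have st: "\<And>p. A p + ell p = max (A p) t" unfolding ell_def by (simp add: max_def)
  show ?thesis
  proof (intro exI conjI ballI impI)
    show "\<And>p. p \<in> K \<Longrightarrow> 0 \<le> ell p" unfolding ell_def by simp
    show "sum ell K = L" using gt unfolding ell_def g_def by simp
  next
    fix p q assume "p \<in> K" "0 < ell p" "q \<in> K"
    then have "t > A p" unfolding ell_def by (simp add: max_def split: if_splits)
    then show "A p + ell p \<le> A q + ell q" unfolding st by simp
  next
    fix p assume pK: "p \<in> K"
    show "h \<le> A p + ell p"
    proof (rule ccontr)
      assume "\<not> h \<le> A p + ell p"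
      then have th: "t < h" and ph: "A p < h" unfolding st by auto
      define S where "S = {p\<in>K. A p < h}"
      have fS: "finite S" using fK unfolding S_def by simp
      have pS: "p \<in> S" using pK ph unfolding S_def by simp
      have "L = sum ell K" using gt unfolding ell_def g_def by simp
      also have "\<dots> = sum ell S"
      proof (rule sum.mono_neutral_right[OF fK])
        show "S \<subseteq> K" unfolding S_def by auto
        show "\<forall>i\<in>K - S. ell i = 0" unfolding S_def ell_def using th by auto
      qed
      also have "\<dots> < (\<Sum>q\<in>S. h - A q)"
      proof (rule sum_strict_mono_ex1[OF fS])
        show "\<forall>x\<in>S. ell x \<le> h - A x" unfolding S_def ell_def using th by auto
        show "\<exists>a\<in>S. ell a < h - A a" using pS th ph unfolding ell_def by auto
      qed
      also have "\<dots> \<le> sum ell0 S"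
        by (rule sum_mono) (use h0 S_def in auto)
      also have "\<dots> \<le> sum ell0 K"
        by (rule sum_mono2[OF fK]) (use e0 S_def in auto)
      finally show False using s0 by simp
    qed
  qed
qed

definition load :: "'a set \<Rightarrow> ('a \<Rightarrow> real) \<Rightarrow> ('a \<Rightarrow> nat) \<Rightarrow> nat \<Rightarrow> real" where
  "load N a \<sigma> p = (\<Sum>i\<in>{i\<in>N. \<sigma> i = p}. a i)"

lemma stake_load: "pool_stake N a \<sigma> ell p = load N a \<sigma> p + ell p"
  unfolding pool_stake_def load_def by simp

lemma load_move:
  assumes fN: "finite N" and iN: "i \<in> N" and pq: "\<sigma> i \<noteq> q"
  shows "load N a (\<sigma>(i:=q)) (\<sigma> i) = load N a \<sigma> (\<sigma> i) - a i"
    and "load N a (\<sigma>(i:=q)) q = load N a \<sigma> q + a i"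
    and "r \<noteq> \<sigma> i \<Longrightarrow> r \<noteq> q \<Longrightarrow> load N a (\<sigma>(i:=q)) r = load N a \<sigma> r"
proof -
  have e1: "{j\<in>N. (\<sigma>(i:=q)) j = \<sigma> i} = {j\<in>N. \<sigma> j = \<sigma> i} - {i}" using pq by auto
  have "load N a \<sigma> (\<sigma> i) = a i + load N a (\<sigma>(i:=q)) (\<sigma> i)"
    unfolding load_def e1 using fN iN by (subst sum.remove[of _ i]) auto
  then show "load N a (\<sigma>(i:=q)) (\<sigma> i) = load N a \<sigma> (\<sigma> i) - a i" by simp
  have e2: "{j\<in>N. (\<sigma>(i:=q)) j = q} = insert i {j\<in>N. \<sigma> j = q}" using pq iN by auto
  show "load N a (\<sigma>(i:=q)) q = load N a \<sigma> q + a i"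
    unfolding load_def e2 using fN pq by (subst sum.insert) auto
  assume "r \<noteq> \<sigma> i" "r \<noteq> q"
  then have "{j\<in>N. (\<sigma>(i:=q)) j = r} = {j\<in>N. \<sigma> j = r}" by auto
  then show "load N a (\<sigma>(i:=q)) r = load N a \<sigma> r" unfolding load_def by simp
qed

lemma sq_move:
  fixes f g :: "nat \<Rightarrow> real"
  assumes fW: "finite W" and p: "p \<in> W" and q: "q \<in> W" and pq: "p \<noteq> q"
    and gp: "g p = f p - x" and gq: "g q = f q + x"
    and gr: "\<And>r. r \<noteq> p \<Longrightarrow> r \<noteq> q \<Longrightarrow> g r = f r"
  shows "(\<Sum>r\<in>W. (g r)^2) = (\<Sum>r\<in>W. (f r)^2) + 2 * x * (f q - f p + x)"
proof -
  have split: "\<And>h::nat\<Rightarrow>real. sum h W = h p + h q + sum h (W - {p} - {q})"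
  proof -
    fix h :: "nat \<Rightarrow> real"
    have "sum h W = h p + sum h (W - {p})" using fW p by (rule sum.remove)
    moreover have "sum h (W - {p}) = h q + sum h (W - {p} - {q})"
      using fW q pq by (intro sum.remove) auto
    ultimately show "sum h W = h p + h q + sum h (W - {p} - {q})" by simp
  qed
  have "sum (\<lambda>r. (g r)^2) (W - {p} - {q}) = sum (\<lambda>r. (f r)^2) (W - {p} - {q})"
    by (rule sum.cong) (auto simp: gr)
  then show ?thesis
    using split[of "\<lambda>r. (g r)^2"] split[of "\<lambda>r. (f r)^2"] gp gq
    by (simp add: power2_eq_square algebra_simps)
qed

theorem theorem4p1:
  fixes N :: "'a set" and a :: "'a \<Rightarrow> real" and L h :: real
  assumes "finite N" and "0 < h" and "0 \<le> L"
    and "\<forall>i\<in>N. 0 < a i \<and> a i < h"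
    and "h \<le> L + sum a N"
  shows "(\<exists>P \<sigma> ell. is_NE N a L h P \<sigma> ell \<and>
             real (OPT N a L h) / real (num_winning N a h P \<sigma> ell) = 1)
       \<and> (\<forall>P \<sigma> ell. is_NE N a L h P \<sigma> ell \<longrightarrow>
             1 \<le> real (OPT N a L h) / real (num_winning N a h P \<sigma> ell))"
proof -
  note fN = assms(1) and hpos = assms(2) and L0 = assms(3) and tot = assms(5)
  have apos: "\<forall>i\<in>N. 0 < a i" and ah: "\<forall>i\<in>N. a i < h" using assms(4) by auto
  let ?S = "{num_winning N a h P \<sigma> ell | P \<sigma> ell. valid_partition N L P \<sigma> ell}"
  have finS: "finite ?S" by (rule OPT_facts[OF fN apos hpos])
  have v1: "valid_partition N L {0} (\<lambda>_. 0) (\<lambda>_. L)"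
    unfolding valid_partition_def using L0 by auto
  have "pool_stake N a (\<lambda>_. 0) (\<lambda>_. L) 0 = L + sum a N"
    unfolding pool_stake_def by simp
  then have "{p\<in>{0::nat}. h \<le> pool_stake N a (\<lambda>_. 0) (\<lambda>_. L) p} = {0}" using tot by auto
  then have n1: "num_winning N a h {0} (\<lambda>_. 0) (\<lambda>_. L) = 1"
    unfolding num_winning_def by simp
  have neS: "?S \<noteq> {}" using v1 by blast
  have optge: "\<And>P \<sigma> ell. valid_partition N L P \<sigma> ell \<Longrightarrow> num_winning N a h P \<sigma> ell \<le> OPT N a L h"
    unfolding OPT_def by (rule Max_ge[OF finS]) blast
  have opt1: "1 \<le> OPT N a L h" using optge[OF v1] n1 by simp
  have optin: "OPT N a L h \<in> ?S" unfolding OPT_def by (rule Max_in[OF finS neS])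
  have part2: "\<forall>P \<sigma> ell. is_NE N a L h P \<sigma> ell \<longrightarrow>
             1 \<le> real (OPT N a L h) / real (num_winning N a h P \<sigma> ell)"
  proof (intro allI impI)
    fix P \<sigma> ell assume ne: "is_NE N a L h P \<sigma> ell"
    then have v: "valid_partition N L P \<sigma> ell" and win: "\<forall>p\<in>P. h \<le> pool_stake N a \<sigma> ell p"
      unfolding is_NE_def Let_def by auto
    have fP: "finite P" using v unfolding valid_partition_def by auto
    have nw: "num_winning N a h P \<sigma> ell = card P" unfolding num_winning_def using win
      by (metis (no_types, lifting) Collect_cong Collect_mem_eq)
    have "P \<noteq> {}"
    proof
      assume "P = {}"
      then have "N = {}" and "L = 0" using v unfolding valid_partition_def by auto
      then show False using tot hpos by simp
    qed
    then have "0 < card P" using fP by auto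
    moreover have "card P \<le> OPT N a L h" using optge[OF v] nw by simp
    ultimately show "1 \<le> real (OPT N a L h) / real (num_winning N a h P \<sigma> ell)"
      using nw by simp
  qed
  have part1: "\<exists>P \<sigma> ell. is_NE N a L h P \<sigma> ell \<and>
             real (OPT N a L h) / real (num_winning N a h P \<sigma> ell) = 1"
  proof -
    obtain P0 \<sigma>0 ell0 where v0: "valid_partition N L P0 \<sigma>0 ell0"
      and o0: "OPT N a L h = num_winning N a h P0 \<sigma>0 ell0" using optin by auto
    define W where "W = {p\<in>P0. h \<le> pool_stake N a \<sigma>0 ell0 p}"
    have fP0: "finite P0" and s0: "\<forall>i\<in>N. \<sigma>0 i \<in> P0" and e0: "\<forall>p\<in>P0. 0 \<le> ell0 p"
      and l0: "sum ell0 P0 = L" using v0 unfolding valid_partition_def by auto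
    have fW: "finite W" using fP0 unfolding W_def by simp
    have cW: "card W = OPT N a L h" using o0 unfolding W_def num_winning_def by simp
    have neW: "W \<noteq> {}" using cW opt1 by auto
    then obtain w0 where w0: "w0 \<in> W" by blast
    define good where "good = (\<lambda>\<sigma>. \<exists>ell. (\<forall>p\<in>W. 0 \<le> ell p) \<and> sum ell W = L \<and>
        (\<forall>p\<in>W. h \<le> load N a \<sigma> p + ell p))"
    define C where "C = {\<sigma> \<in> Pi\<^sub>E N (\<lambda>_. W). good \<sigma>}"
    have fC: "finite C" unfolding C_def using fN fW by (simp add: finite_PiE)
    define \<sigma>1 where "\<sigma>1 = restrict (\<lambda>i. if \<sigma>0 i \<in> W then \<sigma>0 i else w0) N"
    define ell1 where "ell1 = (\<lambda>p. ell0 p + (if p = w0 then sum ell0 (P0 - W) else 0))"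
    have WP0: "W \<subseteq> P0" unfolding W_def by auto
    have "\<sigma>1 \<in> C" unfolding C_def good_def
    proof (intro CollectI conjI exI ballI)
      show "\<sigma>1 \<in> Pi\<^sub>E N (\<lambda>_. W)" unfolding \<sigma>1_def using w0 by auto
      show "\<And>p. p \<in> W \<Longrightarrow> 0 \<le> ell1 p" unfolding ell1_def using e0 WP0
        by (auto intro!: sum_nonneg add_nonneg_nonneg)
      have "sum ell1 W = sum ell0 W + sum ell0 (P0 - W)"
        unfolding ell1_def using fW w0 by (simp add: sum.distrib)
      also have "\<dots> = L" using l0 sum.subset_diff[OF WP0 fP0, of ell0] by simp
      finally show "sum ell1 W = L" .
    next
      fix p assume pW: "p \<in> W"
      have "h \<le> pool_stake N a \<sigma>0 ell0 p" using pW unfolding W_def by simp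
      also have "\<dots> = load N a \<sigma>0 p + ell0 p" by (rule stake_load)
      also have "load N a \<sigma>0 p \<le> load N a \<sigma>1 p"
        unfolding load_def
        by (rule sum_mono2) (use fN apos pW \<sigma>1_def in \<open>auto intro: less_imp_le\<close>)
      moreover have "ell0 p \<le> ell1 p" unfolding ell1_def using e0
        by (auto intro!: sum_nonneg)
      ultimately show "h \<le> load N a \<sigma>1 p + ell1 p" by linarith
    qed
    then have neC: "C \<noteq> {}" by blast
    define \<Phi> where "\<Phi> = (\<lambda>\<sigma>. \<Sum>p\<in>W. (load N a \<sigma> p)^2)"
    have "Min (\<Phi> ` C) \<in> \<Phi> ` C" using fC neC by (intro Min_in) auto
    then obtain \<sigma>s where sC: "\<sigma>s \<in> C" and smv: "\<Phi> \<sigma>s = Min (\<Phi> ` C)" by (metis imageE)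
    have smin: "\<Phi> \<sigma>s \<le> \<Phi> \<sigma>" if "\<sigma> \<in> C" for \<sigma>
      unfolding smv using fC that by (intro Min_le) auto
    have sPi: "\<sigma>s \<in> Pi\<^sub>E N (\<lambda>_. W)" and gs: "good \<sigma>s" using sC unfolding C_def by auto
    obtain ell00 where "(\<forall>p\<in>W. 0 \<le> ell00 p)" "sum ell00 W = L"
        "(\<forall>p\<in>W. h \<le> load N a \<sigma>s p + ell00 p)" using gs unfolding good_def by blast
    moreover have "\<forall>p\<in>W. 0 \<le> load N a \<sigma>s p" unfolding load_def using apos
      by (intro ballI sum_nonneg) (simp add: less_imp_le)
    ultimately obtain ell where e: "\<forall>p\<in>W. 0 \<le> ell p" and se: "sum ell W = L"
      and hw: "\<forall>p\<in>W. h \<le> load N a \<sigma>s p + ell p"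
      and wf: "\<forall>p\<in>W. 0 < ell p \<longrightarrow> (\<forall>q\<in>W. load N a \<sigma>s p + ell p \<le> load N a \<sigma>s q + ell q)"
      using water_fill[OF fW neW, of "load N a \<sigma>s" ell00 L h] by blast
    let ?m = "pool_stake N a \<sigma>s ell"
    have m: "\<And>p. ?m p = load N a \<sigma>s p + ell p" by (rule stake_load)
    have sW: "\<forall>i\<in>N. \<sigma>s i \<in> W" using sPi by auto
    have mh: "\<forall>p\<in>W. h \<le> ?m p" using hw m by simp
    have NE: "is_NE N a L h W \<sigma>s ell"
      unfolding is_NE_def Let_def
    proof (intro conjI ballI impI)
      show "valid_partition N L W \<sigma>s ell" unfolding valid_partition_def using fW sW e se by auto
      show "\<And>p. p \<in> W \<Longrightarrow> h \<le> ?m p" using mh by auto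
    next
      fix i q assume iN: "i \<in> N" and qW: "q \<in> W" and qne: "q \<noteq> \<sigma>s i"
      define p where "p = \<sigma>s i"
      have pW: "p \<in> W" using sW iN p_def by auto
      have ai: "0 < a i" using apos iN by auto
      have mp: "h \<le> ?m p" and mq: "h \<le> ?m q" using mh pW qW by auto
      have key: "?m p \<le> ?m q + a i"
      proof (rule ccontr)
        assume c: "\<not> ?m p \<le> ?m q + a i"
        have ep: "ell p = 0"
        proof (rule ccontr)
          assume "ell p \<noteq> 0"
          then have "0 < ell p" using e pW by force
          then have "?m p \<le> ?m q" using wf pW qW m by simp
          then show False using c ai by simp
        qed
        define \<sigma>' where "\<sigma>' = \<sigma>s(i := q)"
        have lp: "load N a \<sigma>' p = load N a \<sigma>s p - a i"
          using load_move(1)[OF fN iN, of \<sigma>s q] qne unfolding \<sigma>'_def p_def by auto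
        have lq: "load N a \<sigma>' q = load N a \<sigma>s q + a i"
          using load_move(2)[OF fN iN, of \<sigma>s q] qne unfolding \<sigma>'_def by auto
        have lr: "\<And>r. r \<noteq> p \<Longrightarrow> r \<noteq> q \<Longrightarrow> load N a \<sigma>' r = load N a \<sigma>s r"
          using load_move(3)[OF fN iN, of \<sigma>s q] qne unfolding \<sigma>'_def p_def by auto
        have "\<sigma>' \<in> C" unfolding C_def good_def
        proof (intro CollectI conjI exI ballI)
          show "\<sigma>' \<in> Pi\<^sub>E N (\<lambda>_. W)" unfolding \<sigma>'_def using sPi qW iN by auto
          show "\<And>p. p \<in> W \<Longrightarrow> 0 \<le> ell p" using e by auto
          show "sum ell W = L" by (rule se)
        next
          fix r assume rW: "r \<in> W"
          show "h \<le> load N a \<sigma>' r + ell r"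
          proof (cases "r = p")
            case True
            then show ?thesis using lp ep c mq m by simp
          next
            case False
            show ?thesis
            proof (cases "r = q")
              case True
              then show ?thesis using lq mq m ai by simp
            next
              case False
              then show ?thesis using lr[of r] \<open>r \<noteq> p\<close> hw rW by simp
            qed
          qed
        qed
        then have le: "\<Phi> \<sigma>s \<le> \<Phi> \<sigma>'" by (rule smin)
        have pq: "p \<noteq> q" using qne p_def by simp
        have "\<Phi> \<sigma>' = \<Phi> \<sigma>s + 2 * a i * (load N a \<sigma>s q - load N a \<sigma>s p + a i)"
          unfolding \<Phi>_def by (rule sq_move[OF fW pW qW pq lp lq lr])
        moreover have "load N a \<sigma>s q - load N a \<sigma>s p + a i < 0"
          using c m ep e qW by (smt (verit))
        ultimately have "\<Phi> \<sigma>' < \<Phi> \<sigma>s" using ai by (simp add: mult_pos_neg)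
        then show False using le by simp
      qed
      have r1: "rho h (?m p) = 1" "rho h (?m q + a i) = 1" using mp mq ai unfolding rho_def by auto
      have "a i / (?m q + a i) \<le> a i / ?m p"
        by (rule divide_left_mono) (use key ai mp hpos in \<open>auto intro!: mult_pos_pos\<close>)
      then show "a i * rho h (?m q + a i) / (?m q + a i) \<le> a i * rho h (?m (\<sigma>s i)) / ?m (\<sigma>s i)"
        using r1 p_def by simp
    next
      fix i assume iN: "i \<in> N"
      have "rho h (a i) = 0" using ah iN unfolding rho_def by auto
      moreover have "0 \<le> a i * rho h (?m (\<sigma>s i)) / ?m (\<sigma>s i)"
      proof -
        have "h \<le> ?m (\<sigma>s i)" using mh sW iN by auto
        then have "0 < ?m (\<sigma>s i)" using hpos by simp
        then show ?thesis using apos iN unfolding rho_def by (simp add: less_imp_le)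
      qed
      ultimately show "a i * rho h (a i) / a i \<le> a i * rho h (?m (\<sigma>s i)) / ?m (\<sigma>s i)" by simp
    next
      fix p q assume pW: "p \<in> W" and lp: "0 < ell p" and qW: "q \<in> W"
      have "?m p \<le> ?m q" using wf pW qW lp m by simp
      moreover have "h \<le> ?m p" "h \<le> ?m q" using mh pW qW by auto
      ultimately show "rho h (?m q) / ?m q \<le> rho h (?m p) / ?m p"
        unfolding rho_def using hpos by (simp add: frac_le)
    qed
    have "num_winning N a h W \<sigma>s ell = card W" unfolding num_winning_def using mh
      by (metis (no_types, lifting) Collect_cong Collect_mem_eq)
    then have "real (OPT N a L h) / real (num_winning N a h W \<sigma>s ell) = 1"
      using cW opt1 by simp
    then show ?thesis using NE by blast
  qed
  show ?thesis using part1 part2 by blast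
qed

end
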